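(* Let $\mathbf{F}\in[L^2(\mathbb{R}^2)]^2$ be supported in the bounded domain $\Omega$. Let $\mathcal{T}=\{\tau_1,\tau_2,\tau_3\}$ consist of three different complex numbers such that $\tau_2-\tau_1$ and $\tau_3-\tau_1$ are linearly independent (as vectors in $\mathbb{C}\cong\mathbb{R}^2$). Fix $\mathbf{z}\in\mathbb{R}^2\setminus\overline\Omega$ and $\mathbf{q}\in\mathbb{S}$. Then $\mathbf{F}$ is uniquely determined (among sources supported in $\Omega$) by the phaseless data sets $$\mathcal{D}_p=\{|u^\infty_{\mathbf{F}\cup\{\mathbf{z}\},p}(\hat{\mathbf{x}},\mathbf{q},\omega,\tau)|:\ \hat{\mathbf{x}}\in\mathbb{S}_{\mathbf{q}},\ \omega\in\mathbb{W},\ \tau\in\mathcal{T}\}$$ and $$\mathcal{D}_s=\{|u^\infty_{\mathbf{F}\cup\{\mathbf{z}\},s}(\hat{\mathbf{x}},\mathbf{q},\omega,\tau)|:\ \hat{\mathbf{x}}\in\mathbb{S}^\perp_{\mathbf{q}},\ \omega\in\mathbb{W},\ \tau\in\mathcal{T}\}.$$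
   Context: $\mathbb{W}=(\omega_{min},\omega_{max})$, $0<\omega_{min}<\omega_{max}$; Lamé constants $\mu>0$, $2\mu+\lambda>0$; $k_p=\omega/\sqrt{\lambda+2\mu}$, $k_s=\omega/\sqrt\mu$. $\mathbb{S}$ is the unit circle; $\hat{\mathbf{x}}^\perp$ is $\hat{\mathbf{x}}$ rotated anticlockwise by $\pi/2$. $\mathbb{S}_{\mathbf{q}}=\{\hat{\mathbf{x}}\in\mathbb{S}:\mathbf{q}\cdot\hat{\mathbf{x}}\ge 1/2\}$, $\mathbb{S}^\perp_{\mathbf{q}}=\{\hat{\mathbf{x}}\in\mathbb{S}:\mathbf{q}\cdot\hat{\mathbf{x}}^\perp\ge 1/2\}$. Source far fields: $u^\infty_{\mathbf{F},p}(\hat{\mathbf{x}},\omega)=\int_{\mathbb{R}^2}e^{-ik_p\hat{\mathbf{x}}\cdot\mathbf{y}}\hat{\mathbf{x}}\cdot\mathbf{F}(\mathbf{y})d\mathbf{y}$, $u^\infty_{\mathbf{F},s}(\hat{\mathbf{x}},\omega)=\int_{\mathbb{R}^2}e^{-ik_s\hat{\mathbf{x}}\cdot\mathbf{y}}\hat{\mathbf{x}}^\perp\cdot\mathbf{F}(\mathbf{y})d\mathbf{y}$; with an added point source, $u^\infty_{\mathbf{F}\cup\{\mathbf{z}\},p}(\hat{\mathbf{x}},\mathbf{q},\omega,\tau)=u^\infty_{\mathbf{F},p}(\hat{\mathbf{x}},\omega)+\tau e^{-ik_p\hat{\mathbf{x}}\cdot\mathbf{z}}\,\mathbf{q}\cdot\hat{\mathbf{x}}$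 and $u^\infty_{\mathbf{F}\cup\{\mathbf{z}\},s}(\hat{\mathbf{x}},\mathbf{q},\omega,\tau)=u^\infty_{\mathbf{F},s}(\hat{\mathbf{x}},\omega)+\tau e^{-ik_s\hat{\mathbf{x}}\cdot\mathbf{z}}\,\mathbf{q}\cdot\hat{\mathbf{x}}^\perp$. *)

theory Defs
  imports "HOL-Analysis.Analysis"
begin

definition perp :: "real^2 \<Rightarrow> real^2" where
  "perp x = vector [-(x$2), x$1]"

definition dotc :: "real^2 \<Rightarrow> complex^2 \<Rightarrow> complex" where
  "dotc a v = complex_of_real (a$1) * v$1 + complex_of_real (a$2) * v$2"

definition kp :: "real \<Rightarrow> real \<Rightarrow> real \<Rightarrow> real" where
  "kp mu lam \<omega> = \<omega> / sqrt (lam + 2 * mu)"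

definition ks :: "real \<Rightarrow> real \<Rightarrow> real" where
  "ks mu \<omega> = \<omega> / sqrt mu"

definition L2_field :: "(real^2 \<Rightarrow> complex^2) \<Rightarrow> bool" where
  "L2_field F \<longleftrightarrow> F \<in> borel_measurable lborel \<and> integrable lborel (\<lambda>y. (norm (F y))^2)"

definition uinf_p :: "real \<Rightarrow> real \<Rightarrow> (real^2 \<Rightarrow> complex^2) \<Rightarrow> real^2 \<Rightarrow> real \<Rightarrow> complex" where
  "uinf_p mu lam F x \<omega> =
     (LINT y|lborel. exp (- \<i> * complex_of_real (kp mu lam \<omega> * (x \<bullet> y))) * dotc x (F y))"

definition uinf_s :: "real \<Rightarrow> (real^2 \<Rightarrow> complex^2) \<Rightarrow> real^2 \<Rightarrow> real \<Rightarrow> complex" where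
  "uinf_s mu F x \<omega> =
     (LINT y|lborel. exp (- \<i> * complex_of_real (ks mu \<omega> * (x \<bullet> y))) * dotc (perp x) (F y))"

definition uinf_pz :: "real \<Rightarrow> real \<Rightarrow> (real^2 \<Rightarrow> complex^2) \<Rightarrow> real^2 \<Rightarrow> real^2 \<Rightarrow> real^2 \<Rightarrow> real \<Rightarrow> complex \<Rightarrow> complex" where
  "uinf_pz mu lam F z x q \<omega> \<tau> =
     uinf_p mu lam F x \<omega>
     + \<tau> * exp (- \<i> * complex_of_real (kp mu lam \<omega> * (x \<bullet> z))) * complex_of_real (q \<bullet> x)"

definition uinf_sz :: "real \<Rightarrow> (real^2 \<Rightarrow> complex^2) \<Rightarrow> real^2 \<Rightarrow> real^2 \<Rightarrow> real^2 \<Rightarrow> real \<Rightarrow> complex \<Rightarrow> complex" where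
  "uinf_sz mu F z x q \<omega> \<tau> =
     uinf_s mu F x \<omega>
     + \<tau> * exp (- \<i> * complex_of_real (ks mu \<omega> * (x \<bullet> z))) * complex_of_real (q \<bullet> perp x)"

definition S_q :: "real^2 \<Rightarrow> (real^2) set" where
  "S_q q = {x \<in> sphere 0 1. q \<bullet> x \<ge> 1/2}"

definition Sperp_q :: "real^2 \<Rightarrow> (real^2) set" where
  "Sperp_q q = {x \<in> sphere 0 1. q \<bullet> perp x \<ge> 1/2}"

end

theory Submission
  imports Defs "HOL-Complex_Analysis.Conformal_Mappings"
begin



lemma phase_retrieval:
  fixes a c b t1 t2 t3 :: complex
  assumes indep: "\<forall>\<alpha> \<beta> :: real. \<alpha> *\<^sub>R (t2 - t1) + \<beta> *\<^sub>R (t3 - t1) = 0 \<longrightarrow> \<alpha> = 0 \<and> \<beta> = 0"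
    and b: "b \<noteq> 0"
    and e: "\<And>t. t \<in> {t1,t2,t3} \<Longrightarrow> norm (a + t*b) = norm (c + t*b)"
  shows "a = c"
proof -
  define w where "w = (a - c) * cnj b"
  define d where "d = norm a ^ 2 - norm c ^ 2"
  have key: "norm(a+t*b)^2 - norm(c+t*b)^2 = d + 2 * (Re w * Re t + Im w * Im t)" for t
    unfolding cmod_power2 w_def d_def by (simp add: algebra_simps power2_eq_square)
  have k: "d + 2 * (Re w * Re t + Im w * Im t) = 0" if "t \<in> {t1,t2,t3}" for t
    using key[of t] e[OF that] by simp
  define x2 where "x2 = Re (t2 - t1)"
  define y2 where "y2 = Im (t2 - t1)"
  define x3 where "x3 = Re (t3 - t1)"
  define y3 where "y3 = Im (t3 - t1)"
  have e2: "Re w * x2 + Im w * y2 = 0" using k[of t1] k[of t2] unfolding x2_def y2_def by (simp add: algebra_simps)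
  have e3: "Re w * x3 + Im w * y3 = 0" using k[of t1] k[of t3] unfolding x3_def y3_def by (simp add: algebra_simps)
  have D: "x2 * y3 - x3 * y2 \<noteq> 0"
  proof
    assume D0: "x2 * y3 - x3 * y2 = 0"
    have i1: "y3 *\<^sub>R (t2 - t1) + (- y2) *\<^sub>R (t3 - t1) = 0"
      using D0 unfolding x2_def y2_def x3_def y3_def by (simp add: complex_eq_iff algebra_simps)
    have i2: "x3 *\<^sub>R (t2 - t1) + (- x2) *\<^sub>R (t3 - t1) = 0"
      using D0 unfolding x2_def y2_def x3_def y3_def by (simp add: complex_eq_iff algebra_simps)
    have "y3 = 0 \<and> - y2 = 0" using indep i1 by blast
    moreover have "x3 = 0 \<and> - x2 = 0" using indep i2 by blast
    ultimately have "y3 = 0" "y2 = 0" "x3 = 0" "x2 = 0" by auto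
    then have "t2 - t1 = 0" unfolding x2_def y2_def by (simp add: complex_eq_iff)
    then have "1 *\<^sub>R (t2 - t1) + 0 *\<^sub>R (t3 - t1) = 0" by simp
    then have "(1::real) = 0 \<and> (0::real) = 0" using indep by blast
    then show False by simp
  qed
  have "Re w * (x2 * y3 - x3 * y2) = 0"
  proof -
    have "Re w * (x2 * y3 - x3 * y2) = (Re w * x2) * y3 - (Re w * x3) * y2" by (simp add: algebra_simps)
    also have "\<dots> = (- (Im w * y2)) * y3 - (- (Im w * y3)) * y2"
    proof -
      have "Re w * x2 = - (Im w * y2)" "Re w * x3 = - (Im w * y3)" using e2 e3 by linarith+
      then show ?thesis by simp
    qed
    finally show ?thesis by simp
  qed
  then have r: "Re w = 0" using D by simp
  have "Im w * (x2 * y3 - x3 * y2) = 0"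
  proof -
    have "Im w * (x2 * y3 - x3 * y2) = x2 * (Im w * y3) - x3 * (Im w * y2)" by (simp add: algebra_simps)
    also have "\<dots> = x2 * (- (Re w * x3)) - x3 * (- (Re w * x2))"
    proof -
      have "Im w * y2 = - (Re w * x2)" "Im w * y3 = - (Re w * x3)" using e2 e3 by linarith+
      then show ?thesis by simp
    qed
    finally show ?thesis by simp
  qed
  then have i: "Im w = 0" using D by simp
  have "w = 0" using r i by (simp add: complex_eq_iff)
  then show ?thesis using b unfolding w_def by simp
qed



lemma set_int_open_zero:
  fixes g :: "'a::euclidean_space \<Rightarrow> complex"
  assumes g[measurable]: "integrable lborel g"
    and orth: "\<And>\<phi>. continuous_on UNIV \<phi> \<Longrightarrow> (\<And>y. 0 \<le> \<phi> y \<and> \<phi> y \<le> 1) \<Longrightarrow> (LINT y|lborel. \<phi> y *\<^sub>R g y) = 0"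
    and U: "open U"
  shows "(LINT y|lborel. indicator U y *\<^sub>R g y) = 0"
proof (cases "U = UNIV")
  case True
  then show ?thesis using orth[of "\<lambda>_. 1"] by simp
next
  case False
  define \<phi> where "\<phi> n y = min 1 (real n * infdist y (- U))" for n :: nat and y
  have cont: "continuous_on UNIV (\<phi> n)" for n
    unfolding \<phi>_def by (intro continuous_intros)
  have rng: "0 \<le> \<phi> n y \<and> \<phi> n y \<le> 1" for n y
    unfolding \<phi>_def by (auto simp: infdist_nonneg)
  have z: "(LINT y|lborel. \<phi> n y *\<^sub>R g y) = 0" for n
    using orth[OF cont rng] by simp
  have meas: "\<phi> n \<in> borel_measurable lborel" for n
    using cont by (simp add: borel_measurable_continuous_onI)
  have lim: "(\<lambda>n. (LINT y|lborel. \<phi> n y *\<^sub>R g y)) \<longlonglongrightarrow> (LINT y|lborel. indicator U y *\<^sub>R g y)"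
  proof (rule integral_dominated_convergence[where w="\<lambda>y. norm (g y)"])
    show "(\<lambda>y. indicator U y *\<^sub>R g y) \<in> borel_measurable lborel"
      using U borel_measurable_integrable[OF g] by (intro borel_measurable_scaleR borel_measurable_indicator) auto
    show "(\<lambda>y. \<phi> n y *\<^sub>R g y) \<in> borel_measurable lborel" for n
      using meas[of n] borel_measurable_integrable[OF g] by (intro borel_measurable_scaleR) auto
    show "integrable lborel (\<lambda>y. norm (g y))" using g by simp
    show "AE y in lborel. norm (\<phi> n y *\<^sub>R g y) \<le> norm (g y)" for n
      using rng[of n] by (auto intro!: mult_left_le_one_le)
    show "AE y in lborel. (\<lambda>n. \<phi> n y *\<^sub>R g y) \<longlonglongrightarrow> indicator U y *\<^sub>R g y"
    proof (rule AE_I2)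
      fix y
      show "(\<lambda>n. \<phi> n y *\<^sub>R g y) \<longlonglongrightarrow> indicator U y *\<^sub>R g y"
      proof (cases "y \<in> U")
        case True
        have pos: "infdist y (- U) > 0"
          using True False U by (intro infdist_pos_not_in_closed) auto
        obtain N :: nat where N: "N > 1 / infdist y (- U)" using reals_Archimedean2 by blast
        have "\<forall>\<^sub>F n in sequentially. \<phi> n y *\<^sub>R g y = indicator U y *\<^sub>R g y"
          unfolding eventually_sequentially
        proof (intro exI allI impI)
          fix n assume "N \<le> n"
          then have "real n > 1 / infdist y (- U)" using N by linarith
          then have "real n * infdist y (- U) > 1" using pos by (simp add: field_simps)
          then show "\<phi> n y *\<^sub>R g y = indicator U y *\<^sub>R g y" using True unfolding \<phi>_def by simp
        qed
        then show ?thesis by (rule tendsto_eventually)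
      next
        case nU: False
        have "infdist y (- U) = 0" using nU by simp
        then have "\<phi> n y *\<^sub>R g y = indicator U y *\<^sub>R g y" for n using nU unfolding \<phi>_def by simp
        then show ?thesis by (simp del: scaleR_cancel_right)
      qed
    qed
  qed
  then show ?thesis using z by (simp add: LIMSEQ_const_iff)
qed

lemma ae_zero_of_cont:
  fixes g :: "'a::euclidean_space \<Rightarrow> complex"
  assumes g[measurable]: "integrable lborel g"
    and orth: "\<And>\<phi>. continuous_on UNIV \<phi> \<Longrightarrow> (\<And>y. 0 \<le> \<phi> y \<and> \<phi> y \<le> 1) \<Longrightarrow> (LINT y|lborel. \<phi> y *\<^sub>R g y) = 0"
  shows "AE y in lborel. g y = 0"
proof (rule sigma_finite_measure.density_zero[OF sigma_finite_lborel g])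
  fix A :: "'a set" assume "A \<in> sets lborel"
  then have A: "A \<in> sigma_sets UNIV {S. open S}" by (simp add: sets_borel)
  have st: "Int_stable {S :: 'a set. open S}" by (auto simp: Int_stable_def)
  have sub: "{S :: 'a set. open S} \<subseteq> Pow UNIV" by auto
  show "set_lebesgue_integral lborel A g = 0"
    using st sub A
  proof (induction rule: sigma_sets_induct_disjoint)
    case (basic A)
    then have "open A" by simp
    then show ?case using set_int_open_zero[OF g orth] unfolding set_lebesgue_integral_def by blast
  next
    case empty
    then show ?case by (simp add: set_lebesgue_integral_def)
  next
    case (compl A)
    have Am: "A \<in> sets lborel" using compl(1) by (simp add: sets_borel)
    have "(LINT y|lborel. indicator (UNIV - A) y *\<^sub>R g y) = (LINT y|lborel. g y - indicator A y *\<^sub>R g y)"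
    proof (intro Bochner_Integration.integral_cong refl)
      fix y show "indicator (UNIV - A) y *\<^sub>R g y = g y - indicator A y *\<^sub>R g y"
        by (cases "y \<in> A") simp_all
    qed
    also have "\<dots> = (LINT y|lborel. g y) - (LINT y|lborel. indicator A y *\<^sub>R g y)"
      using integrable_mult_indicator[OF Am g] by (intro Bochner_Integration.integral_diff g) auto
    also have "\<dots> = 0"
    proof -
      have i0: "(LINT y|lborel. indicator UNIV y *\<^sub>R g y) = 0" by (rule set_int_open_zero[OF g orth]) simp_all
      have "(LINT y|lborel. g y) = 0" using i0 by simp
      moreover have "(LINT y|lborel. indicator A y *\<^sub>R g y) = 0" using compl(2) unfolding set_lebesgue_integral_def .
      ultimately show ?thesis by simp
    qed
    finally show ?case unfolding set_lebesgue_integral_def .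
  next
    case (union A)
    have Am: "A i \<in> sets lborel" for i using union(2) by (auto simp: sets_borel)
    have "set_lebesgue_integral lborel (\<Union>i. A i) g = (\<Sum>i. set_lebesgue_integral lborel (A i) g)"
    proof (rule lebesgue_integral_countable_add)
      show "A i \<in> sets lborel" for i by (rule Am)
      show "A i \<inter> A j = {}" if "i \<noteq> j" for i j using union(1) that by (auto simp: disjoint_family_on_def)
      show "set_integrable lborel (\<Union>i. A i) g"
        unfolding set_integrable_def using Am by (intro integrable_mult_indicator g) auto
    qed
    also have "\<dots> = 0" using union(3) by simp
    finally show ?case .
  qed
qed



lemma integrable_cont_mult:
  fixes g :: "'a::euclidean_space \<Rightarrow> complex" and \<phi> :: "'a \<Rightarrow> complex"
  assumes g: "integrable lborel g" and S: "bounded S" and gz: "\<forall>y. y \<notin> S \<longrightarrow> g y = 0"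
    and \<phi>: "continuous_on UNIV \<phi>"
  shows "integrable lborel (\<lambda>y. \<phi> y * g y)"
proof -
  have "compact (\<phi> ` closure S)"
    using S \<phi> by (intro compact_continuous_image) (auto intro: continuous_on_subset simp: compact_closure)
  then obtain B where B: "\<forall>y\<in>closure S. norm (\<phi> y) \<le> B"
    by (auto dest!: compact_imp_bounded simp: bounded_iff)
  show ?thesis
  proof (rule Bochner_Integration.integrable_bound[where f="\<lambda>y. complex_of_real B * g y"])
    show "integrable lborel (\<lambda>y. complex_of_real B * g y)" using g by simp
    show "(\<lambda>y. \<phi> y * g y) \<in> borel_measurable lborel"
      using borel_measurable_continuous_onI[OF \<phi>] borel_measurable_integrable[OF g]
      by (intro borel_measurable_times) auto
    show "AE y in lborel. norm (\<phi> y * g y) \<le> norm (complex_of_real B * g y)"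
    proof (rule AE_I2)
      fix y
      show "norm (\<phi> y * g y) \<le> norm (complex_of_real B * g y)"
      proof (cases "y \<in> S")
        case True
        then have "norm (\<phi> y) \<le> B" using B closure_subset by blast
        then have "norm (\<phi> y) \<le> \<bar>B\<bar>" by simp
        then show ?thesis by (simp add: norm_mult mult_right_mono)
      next
        case False
        then show ?thesis using gz by simp
      qed
    qed
  qed
qed

definition Iint :: "(real^2 \<Rightarrow> complex) \<Rightarrow> (real^2 \<Rightarrow> real) \<Rightarrow> complex" where
  "Iint g r = (LINT y|lborel. complex_of_real (r y) * g y)"

lemma vec2_decomp: "(y :: real^2) = y$1 *\<^sub>R axis 1 1 + y$2 *\<^sub>R axis 2 1"
  by (simp add: vec_eq_iff forall_2 axis_def)

lemma linear2: "linear f \<Longrightarrow> f (y :: real^2) = y$1 * f (axis 1 1) + y$2 * (f (axis 2 1) :: real)"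
  by (subst vec2_decomp) (simp add: linear_add linear_scale)

lemma poly_orth:
  fixes g :: "real^2 \<Rightarrow> complex"
  assumes g: "integrable lborel g" and S: "bounded S" and gz: "\<forall>y. y \<notin> S \<longrightarrow> g y = 0"
    and mom: "\<And>a b. Iint g (\<lambda>y. (y$1)^a * (y$2)^b) = 0"
    and p: "real_polynomial_function p"
  shows "Iint g p = 0"
proof -
  have intg: "integrable lborel (\<lambda>y. complex_of_real (r y) * g y)" if "continuous_on UNIV r" for r
    using integrable_cont_mult[OF g S gz, of "\<lambda>y. complex_of_real (r y)"] that
    by (auto intro: continuous_intros)
  have Iadd: "Iint g (\<lambda>y. r y + s y) = Iint g r + Iint g s" if "continuous_on UNIV r" "continuous_on UNIV s" for r s
    unfolding Iint_def using intg[OF that(1)] intg[OF that(2)]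
    by (simp add: distrib_right)
  have Icm: "Iint g (\<lambda>y. c * r y) = c * Iint g r" for c r
    unfolding Iint_def by (simp add: mult.assoc)
  have cmon: "continuous_on UNIV (\<lambda>y::real^2. (y$1)^a * (y$2)^b)" for a b
    by (intro continuous_intros)
  define Z where "Z r \<longleftrightarrow> continuous_on UNIV r \<and> (\<forall>a b. Iint g (\<lambda>y. r y * ((y$1)^a * (y$2)^b)) = 0)" for r
  have main: "\<And>r. Z r \<Longrightarrow> Z (\<lambda>y. r y * p y)" using p
  proof (induction p rule: real_polynomial_function.induct)
    case (linear f)
    then have cr: "continuous_on UNIV r" and zr: "\<And>a b. Iint g (\<lambda>y. r y * ((y$1)^a * (y$2)^b)) = 0"
      unfolding Z_def by auto
    have cf: "continuous_on UNIV f" using linear(1) by (simp add: linear_continuous_on)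
    have lf: "linear f" using linear(1) bounded_linear.linear by blast
    show ?case unfolding Z_def
    proof (intro conjI allI)
      show "continuous_on UNIV (\<lambda>y. r y * f y)" using cr cf by (intro continuous_intros)
      fix a b
      have eq: "(\<lambda>y. r y * f y * ((y$1)^a * (y$2)^b)) =
        (\<lambda>y. f (axis 1 1) * (r y * ((y$1)^(Suc a) * (y$2)^b)) + f (axis 2 1) * (r y * ((y$1)^a * (y$2)^(Suc b))))"
        by (rule ext, subst linear2[OF lf]) (simp add: algebra_simps)
      show "Iint g (\<lambda>y. r y * f y * ((y$1)^a * (y$2)^b)) = 0"
        unfolding eq using zr[of "Suc a" b] zr[of a "Suc b"]
        by (subst Iadd) (auto intro!: continuous_intros cr simp: Icm)
    qed
  next
    case (const c)
    then show ?case unfolding Z_def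
      by (auto intro!: continuous_intros simp: mult.commute[of _ c] mult.assoc Icm)
  next
    case (add p q)
    have zp: "Z (\<lambda>y. r y * p y)" and zq: "Z (\<lambda>y. r y * q y)" using add by auto
    show ?case unfolding Z_def
    proof (intro conjI allI)
      show "continuous_on UNIV (\<lambda>y. r y * (p y + q y))"
        using zp zq unfolding Z_def by (simp add: distrib_left continuous_on_add)
      fix a b
      have "Iint g (\<lambda>y. r y * (p y + q y) * ((y$1)^a * (y$2)^b)) =
            Iint g (\<lambda>y. r y * p y * ((y$1)^a * (y$2)^b) + r y * q y * ((y$1)^a * (y$2)^b))"
        by (simp add: algebra_simps)
      also have "\<dots> = 0"
        using zp zq unfolding Z_def by (subst Iadd) (auto intro!: continuous_intros)
      finally show "Iint g (\<lambda>y. r y * (p y + q y) * ((y$1)^a * (y$2)^b)) = 0" .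
    qed
  next
    case (mult p q)
    have "Z (\<lambda>y. r y * p y)" using mult by auto
    then have "Z (\<lambda>y. (r y * p y) * q y)" using mult by blast
    then show ?case by (simp add: mult.assoc)
  qed
  have "Z (\<lambda>_. 1)" unfolding Z_def using mom by simp
  from main[OF this] have "\<forall>a b. Iint g (\<lambda>y. 1 * p y * ((y$1)^a * (y$2)^b)) = 0" unfolding Z_def by blast
  then have "Iint g (\<lambda>y. 1 * p y * ((y$1)^0 * (y$2)^0)) = 0" by blast
  then show ?thesis by simp
qed

lemma moments_zero_ae:
  fixes g :: "real^2 \<Rightarrow> complex"
  assumes g: "integrable lborel g" and S: "bounded S" and gz: "\<forall>y. y \<notin> S \<longrightarrow> g y = 0"
    and mom: "\<And>a b. Iint g (\<lambda>y. (y$1)^a * (y$2)^b) = 0"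
  shows "AE y in lborel. g y = 0"
proof (rule ae_zero_of_cont[OF g])
  fix \<phi> :: "real^2 \<Rightarrow> real"
  assume \<phi>: "continuous_on UNIV \<phi>"
  define N where "N = norm (Iint g \<phi>)"
  define C where "C = (LINT y|lborel. norm (g y))"
  have C0: "C \<ge> 0" unfolding C_def by simp
  have bnd: "N \<le> e * C" if e: "e > 0" for e
  proof -
    have cS: "compact (closure S)" using S by (simp add: compact_closure)
    have cphi: "continuous_on (closure S) \<phi>" using \<phi> by (rule continuous_on_subset) simp
    obtain p where p: "real_polynomial_function p" and pe: "\<And>x. x \<in> closure S \<Longrightarrow> \<bar>\<phi> x - p x\<bar> < e"
      using Stone_Weierstrass_real_polynomial_function[OF cS cphi e] by blast
    have pc: "continuous_on UNIV p"
      using p continuous_on_polymonial_function real_polynomial_function_eq by blast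
    have ip: "Iint g p = 0" by (rule poly_orth[OF g S gz mom p])
    have i1: "integrable lborel (\<lambda>y. complex_of_real (\<phi> y) * g y)"
      using integrable_cont_mult[OF g S gz, of "\<lambda>y. complex_of_real (\<phi> y)"] \<phi> by (auto intro: continuous_intros)
    have i2: "integrable lborel (\<lambda>y. complex_of_real (p y) * g y)"
      using integrable_cont_mult[OF g S gz, of "\<lambda>y. complex_of_real (p y)"] pc by (auto intro: continuous_intros)
    have "Iint g \<phi> = Iint g \<phi> - Iint g p" using ip by simp
    also have "\<dots> = (LINT y|lborel. complex_of_real (\<phi> y - p y) * g y)"
      unfolding Iint_def Bochner_Integration.integral_diff[OF i1 i2, symmetric]
      by (simp only: of_real_diff left_diff_distrib)
    finally have eq: "Iint g \<phi> = (LINT y|lborel. complex_of_real (\<phi> y - p y) * g y)" .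
    have "N \<le> (LINT y|lborel. norm (complex_of_real (\<phi> y - p y) * g y))"
      unfolding N_def eq by (rule integral_norm_bound)
    also have "\<dots> \<le> (LINT y|lborel. e * norm (g y))"
    proof (rule integral_mono)
      have "integrable lborel (\<lambda>y. complex_of_real (\<phi> y) * g y - complex_of_real (p y) * g y)"
        using i1 i2 by (rule Bochner_Integration.integrable_diff)
      then have "integrable lborel (\<lambda>y. complex_of_real (\<phi> y - p y) * g y)"
        by (simp only: of_real_diff left_diff_distrib)
      then show "integrable lborel (\<lambda>y. norm (complex_of_real (\<phi> y - p y) * g y))"
        by (rule integrable_norm)
      show "integrable lborel (\<lambda>y. e * norm (g y))" using g by simp
      fix y
      show "norm (complex_of_real (\<phi> y - p y) * g y) \<le> e * norm (g y)"
      proof (cases "y \<in> S")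
        case True
        then have "y \<in> closure S" using closure_subset by blast
        then have "\<bar>\<phi> y - p y\<bar> \<le> e" using pe less_imp_le by blast
        moreover have "norm (complex_of_real (\<phi> y - p y)) = \<bar>\<phi> y - p y\<bar>" by (rule norm_of_real)
        ultimately have "norm (complex_of_real (\<phi> y - p y)) \<le> e" by linarith
        then show ?thesis unfolding norm_mult by (rule mult_right_mono) simp
      next
        case False then show ?thesis using gz by simp
      qed
    qed
    also have "\<dots> = e * C" unfolding C_def by simp
    finally show ?thesis .
  qed
  have "N \<le> 0"
  proof (rule ccontr)
    assume "\<not> N \<le> 0"
    then have Np: "N > 0" by simp
    define e where "e = N / (2 * (C + 1))"
    have ep: "e > 0" unfolding e_def using Np C0 by simp
    have "e * C < N"
    proof -
      have "e * C = N * (C / (2 * (C + 1)))" unfolding e_def by simp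
      also have "\<dots> < N * 1"
      proof (rule mult_strict_left_mono)
        show "C / (2 * (C + 1)) < 1" using C0 by (simp add: divide_less_eq)
      qed (rule Np)
      finally show ?thesis by simp
    qed
    with bnd[OF ep] show False by simp
  qed
  then have "Iint g \<phi> = 0" unfolding N_def by simp
  then show "(LINT y|lborel. \<phi> y *\<^sub>R g y) = 0" unfolding Iint_def scaleR_conv_of_real .
qed



lemma coeffs_zero:
  fixes a :: "nat \<Rightarrow> complex"
  assumes sm: "\<And>z. (\<lambda>n. a n * z^n) sums 0"
  shows "a m = 0"
proof (cases "m = 0")
  case True then show ?thesis using sm[of 0] by simp
next
  case False
  show ?thesis
  proof (rule ccontr)
    assume am: "a m \<noteq> 0"
    have sm': "\<And>x. norm (x - 0) < 1 \<Longrightarrow> (\<lambda>n. a n * (x - 0) ^ n) sums ((\<lambda>_. 0::complex) x)"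
      using sm by simp
    show False
    proof (rule powser_0_nonzero[where r=1 and a=a and \<xi>=0 and f="\<lambda>_. 0" and m=m])
      fix s :: real assume s: "0 < s" and nz: "\<And>z::complex. z \<in> cball 0 s - {0} \<Longrightarrow> (\<lambda>_. 0::complex) z \<noteq> 0"
      show False using nz[of "complex_of_real s"] s by simp
    qed (use sm' am False in auto)
  qed
qed

lemma limpt_interval:
  assumes "a < b"
  shows "complex_of_real ((a+b)/2) islimpt (complex_of_real ` {a<..<b})"
  unfolding islimpt_approachable
proof (intro allI impI)
  fix e :: real assume e: "e > 0"
  define d where "d = min (e/2) ((b-a)/4)"
  have d: "d > 0" "d < e" using e assms unfolding d_def by auto
  have d4: "d \<le> (b-a)/4" unfolding d_def by (rule min.cobounded2)
  show "\<exists>x'\<in>complex_of_real ` {a<..<b}. x' \<noteq> complex_of_real ((a + b) / 2) \<and> dist x' (complex_of_real ((a + b) / 2)) < e"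
  proof (intro bexI conjI)
    show "complex_of_real ((a+b)/2 + d) \<noteq> complex_of_real ((a + b) / 2)" by (simp only: of_real_eq_iff) (use d in linarith)
    show "dist (complex_of_real ((a+b)/2 + d)) (complex_of_real ((a + b) / 2)) < e"
      using d by (simp add: dist_norm)
    have "a < (a+b)/2 + d" using d d4 assms by (simp add: field_simps)
    moreover have "(a+b)/2 + d < b" using d d4 assms by (simp add: field_simps)
    ultimately show "complex_of_real ((a+b)/2 + d) \<in> complex_of_real ` {a<..<b}"
      by (intro imageI) simp
  qed
qed

lemma summable_exp_real: "summable (\<lambda>n. (x::real)^n / fact n)"
  using summable_exp[of x] by (simp add: divide_inverse mult.commute)

lemma entire_moments:
  fixes h :: "'a \<Rightarrow> complex" and s :: "'a \<Rightarrow> real"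
  assumes h: "integrable M h" and s[measurable]: "s \<in> borel_measurable M"
    and R: "\<And>y. y \<in> space M \<Longrightarrow> h y \<noteq> 0 \<Longrightarrow> \<bar>s y\<bar> \<le> R"
    and ab: "a < b"
    and zero: "\<And>t. a < t \<Longrightarrow> t < b \<Longrightarrow> (LINT y|M. exp (- \<i> * complex_of_real (t * s y)) * h y) = 0"
  shows "(LINT y|M. complex_of_real (s y) ^ n * h y) = 0"
proof -
  have hm[measurable]: "h \<in> borel_measurable M" using h by (rule borel_measurable_integrable)
  define R' where "R' = \<bar>R\<bar>"
  have R'0: "R' \<ge> 0" unfolding R'_def by simp
  define m where "m n = (LINT y|M. complex_of_real (s y)^n * h y)" for n
  define K where "K = (LINT y|M. norm (h y))"
  have K0: "K \<ge> 0" unfolding K_def by simp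
  have sb: "\<bar>s y\<bar> ^ n * norm (h y) \<le> R'^n * norm (h y)" if y: "y \<in> space M" for y n
  proof (cases "h y = 0")
    case False
    then have "\<bar>s y\<bar> \<le> R'" using R[OF y] unfolding R'_def by simp
    then have "\<bar>s y\<bar> ^ n \<le> R'^n" by (simp add: power_mono)
    then show ?thesis by (simp add: mult_right_mono)
  qed simp
  have int_n: "integrable M (\<lambda>y. complex_of_real (s y)^n * h y)" for n
  proof (rule Bochner_Integration.integrable_bound[where f="\<lambda>y. complex_of_real (R'^n) * h y"])
    show "integrable M (\<lambda>y. complex_of_real (R' ^ n) * h y)" using h by simp
    show "(\<lambda>y. complex_of_real (s y) ^ n * h y) \<in> borel_measurable M" by measurable
    show "AE y in M. norm (complex_of_real (s y) ^ n * h y) \<le> norm (complex_of_real (R' ^ n) * h y)"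
      using sb R'0 by (intro AE_I2) (simp add: norm_mult norm_power)
  qed
  have mb: "norm (m n) \<le> R'^n * K" for n
  proof -
    have "norm (m n) \<le> (LINT y|M. norm (complex_of_real (s y)^n * h y))"
      unfolding m_def by (rule integral_norm_bound)
    also have "\<dots> \<le> (LINT y|M. R'^n * norm (h y))"
    proof (rule integral_mono)
      show "integrable M (\<lambda>y. norm (complex_of_real (s y)^n * h y))" by (rule integrable_norm[OF int_n])
      show "integrable M (\<lambda>y. R'^n * norm (h y))" using h by simp
      fix y assume y: "y \<in> space M"
      show "norm (complex_of_real (s y)^n * h y) \<le> R'^n * norm (h y)"
        using sb[OF y, of n] by (simp add: norm_mult norm_power)
    qed
    also have "\<dots> = R'^n * K" unfolding K_def by simp
    finally show ?thesis .
  qed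
  define c where "c n = (- \<i>)^n / of_real (fact n) * m n" for n
  have summ: "summable (\<lambda>n. c n * z^n)" for z
  proof (rule summable_comparison_test)
    show "\<exists>N. \<forall>n\<ge>N. norm (c n * z ^ n) \<le> (R' * norm z)^n / fact n * K"
    proof (intro exI allI impI)
      fix n :: nat
      have "norm (c n * z ^ n) = norm (m n) / fact n * norm z ^ n"
        unfolding c_def by (simp add: norm_mult norm_divide norm_power)
      also have "\<dots> \<le> R'^n * K / fact n * norm z ^ n"
        using mb[of n] by (intro mult_right_mono divide_right_mono) auto
      also have "\<dots> = (R' * norm z)^n / fact n * K" by (simp add: power_mult_distrib)
      finally show "norm (c n * z ^ n) \<le> (R' * norm z)^n / fact n * K" .
    qed
    show "summable (\<lambda>n. (R' * norm z)^n / fact n * K)"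
      using summable_exp_real[of "R' * norm z"] by (rule summable_mult2)
  qed
  define f where "f z = (\<Sum>n. c n * z^n)" for z
  have holo: "f holomorphic_on UNIV"
    unfolding holomorphic_on_def field_differentiable_def f_def
    using termdiffs_strong_converges_everywhere[OF summ] has_field_derivative_at_within by blast
  have freal: "f (complex_of_real t) = (LINT y|M. exp (- \<i> * complex_of_real (t * s y)) * h y)" for t
  proof -
    define F where "F n y = ((- \<i> * complex_of_real (t * s y))^n /\<^sub>R fact n) * h y" for n y
    have Feq: "F n = (\<lambda>y. ((- \<i>)^n * complex_of_real t ^ n / of_real (fact n)) * (complex_of_real (s y)^n * h y))" for n
    proof (rule ext)
      fix y
      have "(- \<i> * complex_of_real (t * s y))^n = (-\<i>)^n * (complex_of_real t ^n * complex_of_real (s y)^n)"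
        by (simp only: of_real_mult power_mult_distrib)
      then show "F n y = ((- \<i>)^n * complex_of_real t ^ n / of_real (fact n)) * (complex_of_real (s y)^n * h y)"
        unfolding F_def scaleR_conv_of_real by (simp add: field_simps)
    qed
    have intF: "integrable M (F n)" for n unfolding Feq using int_n by simp
    have iF: "integral\<^sup>L M (F n) = c n * complex_of_real t ^ n" for n
      unfolding Feq c_def m_def by simp
    have nF: "norm (F n y) = (\<bar>t\<bar> * \<bar>s y\<bar>)^n / fact n * norm (h y)" for n y
      unfolding F_def by (simp add: norm_mult norm_power abs_mult divide_inverse ac_simps)
    have sF: "(\<lambda>n. F n y) sums (exp (- \<i> * complex_of_real (t * s y)) * h y)" for y
      unfolding F_def by (rule sums_mult2) (rule exp_converges)
    have "(\<lambda>n. integral\<^sup>L M (F n)) sums (LINT y|M. (\<Sum>n. F n y))"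
    proof (rule sums_integral[OF intF])
      show "AE x in M. summable (\<lambda>i. norm (F i x))"
        unfolding nF using summable_exp_real by (intro AE_I2 summable_mult2)
      show "summable (\<lambda>i. LINT x|M. norm (F i x))"
      proof (rule summable_comparison_test)
        show "\<exists>N. \<forall>n\<ge>N. norm (LINT x|M. norm (F n x)) \<le> (\<bar>t\<bar> * R')^n / fact n * K"
        proof (intro exI allI impI)
          fix n :: nat
          have "norm (LINT x|M. norm (F n x)) = (LINT x|M. norm (F n x))" by simp
          also have "\<dots> \<le> (LINT x|M. (\<bar>t\<bar> * R')^n / fact n * norm (h x))"
          proof (rule integral_mono)
            show "integrable M (\<lambda>x. norm (F n x))" using intF by simp
            show "integrable M (\<lambda>x. (\<bar>t\<bar> * R')^n / fact n * norm (h x))" using h by simp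
            fix x assume x: "x \<in> space M"
            have "(\<bar>t\<bar> * \<bar>s x\<bar>)^n * norm (h x) \<le> (\<bar>t\<bar> * R')^n * norm (h x)"
              using sb[OF x, of n] by (simp add: power_mult_distrib mult.assoc mult_left_mono)
            then show "norm (F n x) \<le> (\<bar>t\<bar> * R')^n / fact n * norm (h x)"
              unfolding nF by (simp add: divide_right_mono)
          qed
          also have "\<dots> = (\<bar>t\<bar> * R')^n / fact n * K" unfolding K_def by simp
          finally show "norm (LINT x|M. norm (F n x)) \<le> (\<bar>t\<bar> * R')^n / fact n * K" .
        qed
        show "summable (\<lambda>n. (\<bar>t\<bar> * R')^n / fact n * K)"
          using summable_exp_real[of "\<bar>t\<bar> * R'"] by (rule summable_mult2)
      qed
    qed
    moreover have "(\<lambda>y. \<Sum>n. F n y) = (\<lambda>y. exp (- \<i> * complex_of_real (t * s y)) * h y)"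
      using sF by (simp add: sums_iff)
    ultimately have "(\<lambda>n. c n * complex_of_real t ^ n) sums (LINT y|M. exp (- \<i> * complex_of_real (t * s y)) * h y)"
      unfolding iF by simp
    moreover have "(\<lambda>n. c n * complex_of_real t ^ n) sums f (complex_of_real t)"
      unfolding f_def by (rule summable_sums[OF summ])
    ultimately show ?thesis using sums_unique2 by blast
  qed
  have fz: "f w = 0" for w
  proof (rule analytic_continuation[OF holo])
    show "open (UNIV :: complex set)" by simp
    show "connected (UNIV :: complex set)" by (rule connected_UNIV)
    show "complex_of_real ` {a<..<b} \<subseteq> UNIV" by simp
    show "complex_of_real ((a+b)/2) \<in> UNIV" by simp
    show "complex_of_real ((a+b)/2) islimpt (complex_of_real ` {a<..<b})" by (rule limpt_interval[OF ab])
    show "f z = 0" if "z \<in> complex_of_real ` {a<..<b}" for z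
      using that freal zero by auto
  qed simp
  have "(\<lambda>n. c n * z^n) sums 0" for z
    using summable_sums[OF summ[of z]] fz[of z] unfolding f_def by simp
  then have "c n = 0" by (rule coeffs_zero)
  then show ?thesis unfolding c_def m_def by simp
qed


definition Ppoly :: "(nat \<Rightarrow> nat \<Rightarrow> complex) \<Rightarrow> nat \<Rightarrow> complex \<Rightarrow> complex \<Rightarrow> complex" where
  "Ppoly m n x1 x2 = (\<Sum>k\<le>n. of_nat (n choose k) * x1^k * x2^(n-k) * m k (n-k))"

definition Apoly :: "(nat \<Rightarrow> nat \<Rightarrow> complex) \<Rightarrow> (nat \<Rightarrow> nat \<Rightarrow> complex) \<Rightarrow> nat \<Rightarrow> complex \<Rightarrow> complex \<Rightarrow> complex" where
  "Apoly m1 m2 n x1 x2 = x1 * Ppoly m1 n x1 x2 + x2 * Ppoly m2 n x1 x2"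

definition Bpoly :: "(nat \<Rightarrow> nat \<Rightarrow> complex) \<Rightarrow> (nat \<Rightarrow> nat \<Rightarrow> complex) \<Rightarrow> nat \<Rightarrow> complex \<Rightarrow> complex \<Rightarrow> complex" where
  "Bpoly m1 m2 n x1 x2 = - x2 * Ppoly m1 n x1 x2 + x1 * Ppoly m2 n x1 x2"

lemma Ppoly_hom: "Ppoly m n (r * c) (r * s) = r^n * Ppoly m n c s"
proof -
  have "of_nat (n choose k) * (r * c)^k * (r * s)^(n-k) * m k (n-k) = r^n * (of_nat (n choose k) * c^k * s^(n-k) * m k (n-k))"
    if "k \<le> n" for k
  proof -
    have rr: "r^k * r^(n-k) = r^n" using that by (simp flip: power_add)
    have "(r * c)^k * (r * s)^(n-k) = (r^k * r^(n-k)) * (c^k * s^(n-k))"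
      by (simp only: power_mult_distrib mult_ac)
    then have "(r * c)^k * (r * s)^(n-k) = r^n * (c^k * s^(n-k))" by (simp only: rr)
    then show ?thesis by (simp add: mult_ac)
  qed
  then show ?thesis unfolding Ppoly_def sum_distrib_left by (intro sum.cong) auto
qed

lemma holo_Ppoly: "(\<lambda>w. Ppoly m n (cos w) (sin w)) holomorphic_on UNIV"
  unfolding Ppoly_def by (intro holomorphic_intros)

lemma continue_zero:
  fixes f :: "complex \<Rightarrow> complex"
  assumes holo: "f holomorphic_on UNIV" and d: "d > 0"
    and z: "\<And>\<theta>. \<bar>\<theta> - \<alpha>\<bar> < d \<Longrightarrow> f (complex_of_real \<theta>) = 0"
  shows "f w = 0"
proof (rule analytic_continuation[OF holo])
  show "open (UNIV :: complex set)" by simp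
  show "connected (UNIV :: complex set)" by (rule connected_UNIV)
  show "complex_of_real ` {\<alpha>-d<..<\<alpha>+d} \<subseteq> UNIV" by simp
  show "complex_of_real \<alpha> \<in> UNIV" by simp
  have "complex_of_real (((\<alpha>-d)+(\<alpha>+d))/2) islimpt (complex_of_real ` {\<alpha>-d<..<\<alpha>+d})"
    by (rule limpt_interval) (use d in simp)
  then show "complex_of_real \<alpha> islimpt (complex_of_real ` {\<alpha>-d<..<\<alpha>+d})" by simp
  show "f x = 0" if "x \<in> complex_of_real ` {\<alpha>-d<..<\<alpha>+d}" for x
    using that z by (auto simp: abs_less_iff)
qed simp

lemma cos_ge_half: "\<bar>\<theta>\<bar> < pi/3 \<Longrightarrow> cos \<theta> \<ge> 1/2"
proof -
  assume h: "\<bar>\<theta>\<bar> < pi/3"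
  have "cos (pi/3) \<le> cos \<bar>\<theta>\<bar>" using h by (intro cos_monotone_0_pi_le) auto
  then show ?thesis by (simp add: cos_60 cos_abs_real)
qed

lemma inner2: "(x :: real^2) \<bullet> y = x$1 * y$1 + x$2 * y$2"
  by (simp add: inner_vec_def sum_2)

lemma circ_sphere: "vector [cos \<theta>, sin \<theta>] \<in> sphere (0::real^2) 1"
proof -
  have "norm (vector [cos \<theta>, sin \<theta>] :: real^2) = sqrt ((cos \<theta>)\<^sup>2 + (sin \<theta>)\<^sup>2)"
    unfolding norm_eq_sqrt_inner inner2 by (simp add: power2_eq_square)
  then show ?thesis by simp
qed

lemma dir_extend:
  fixes m1 m2 :: "nat \<Rightarrow> nat \<Rightarrow> complex" and q :: "real^2"
  assumes q: "q \<in> sphere 0 1"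
    and hA: "\<And>x. x \<in> S_q q \<Longrightarrow> Apoly m1 m2 n (of_real (x$1)) (of_real (x$2)) = 0"
    and hB: "\<And>x. x \<in> Sperp_q q \<Longrightarrow> Bpoly m1 m2 n (of_real (x$1)) (of_real (x$2)) = 0"
  shows "\<And>x1 x2. Apoly m1 m2 n (of_real x1) (of_real x2) = 0"
    and "\<And>x1 x2. Bpoly m1 m2 n (of_real x1) (of_real x2) = 0"
proof -
  have "(q$1)\<^sup>2 + (q$2)\<^sup>2 = 1"
  proof -
    have "norm q = 1" using q by simp
    then have "q \<bullet> q = 1" by (simp only: norm_eq_1)
    then show ?thesis unfolding inner2 by (simp add: power2_eq_square)
  qed
  then obtain \<alpha> where qa: "q$1 = cos \<alpha>" "q$2 = sin \<alpha>" using sincos_total_2pi_le by blast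
  have hol: "(\<lambda>w. Apoly m1 m2 n (cos w) (sin w)) holomorphic_on UNIV"
    unfolding Apoly_def by (intro holomorphic_intros holo_Ppoly) 
  have holB: "(\<lambda>w. Bpoly m1 m2 n (cos w) (sin w)) holomorphic_on UNIV"
    unfolding Bpoly_def by (intro holomorphic_intros holo_Ppoly)
  have pi3: "pi / 3 > 0" by simp
  have Az: "Apoly m1 m2 n (cos w) (sin w) = 0" for w
  proof (rule continue_zero[OF hol pi3, where \<alpha>=\<alpha>])
    fix \<theta> :: real assume th: "\<bar>\<theta> - \<alpha>\<bar> < pi / 3"
    have "vector [cos \<theta>, sin \<theta>] \<in> S_q q"
      unfolding S_q_def using circ_sphere cos_ge_half[OF th]
      by (simp add: inner2 qa cos_diff mult.commute)
    from hA[OF this] show "Apoly m1 m2 n (cos (complex_of_real \<theta>)) (sin (complex_of_real \<theta>)) = 0"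
      by (simp add: cos_of_real sin_of_real)
  qed
  have Bz: "Bpoly m1 m2 n (cos w) (sin w) = 0" for w
  proof (rule continue_zero[OF holB pi3, where \<alpha>="\<alpha> - pi/2"])
    fix \<theta> :: real assume th: "\<bar>\<theta> - (\<alpha> - pi/2)\<bar> < pi / 3"
    have "cos (\<theta> - (\<alpha> - pi/2)) = cos ((\<theta> - \<alpha>) + pi/2)" by (simp add: algebra_simps)
    also have "\<dots> = - sin (\<theta> - \<alpha>)" by (simp add: cos_add)
    also have "\<dots> = cos \<alpha> * sin \<theta> * (-1) + sin \<alpha> * cos \<theta>" by (simp add: sin_diff algebra_simps)
    finally have c: "cos (\<theta> - (\<alpha> - pi/2)) = cos \<alpha> * sin \<theta> * (-1) + sin \<alpha> * cos \<theta>" .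
    have "vector [cos \<theta>, sin \<theta>] \<in> Sperp_q q"
      unfolding Sperp_q_def perp_def using circ_sphere cos_ge_half[OF th] c
      by (simp add: inner2 qa)
    from hB[OF this] show "Bpoly m1 m2 n (cos (complex_of_real \<theta>)) (sin (complex_of_real \<theta>)) = 0"
      by (simp add: cos_of_real sin_of_real)
  qed
  show "Apoly m1 m2 n (of_real x1) (of_real x2) = 0" for x1 x2
  proof -
    obtain r t where rt: "x1 = r * cos t" "x2 = r * sin t" using polar_Ex by blast
    have "Apoly m1 m2 n (of_real x1) (of_real x2) = of_real r ^ Suc n * Apoly m1 m2 n (cos (of_real t)) (sin (of_real t))"
      unfolding rt Apoly_def by (simp add: cos_of_real sin_of_real Ppoly_hom algebra_simps)
    then show ?thesis using Az by simp
  qed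
  show "Bpoly m1 m2 n (of_real x1) (of_real x2) = 0" for x1 x2
  proof -
    obtain r t where rt: "x1 = r * cos t" "x2 = r * sin t" using polar_Ex by blast
    have "Bpoly m1 m2 n (of_real x1) (of_real x2) = of_real r ^ Suc n * Bpoly m1 m2 n (cos (of_real t)) (sin (of_real t))"
      unfolding rt Bpoly_def by (simp add: cos_of_real sin_of_real Ppoly_hom algebra_simps)
    then show ?thesis using Bz by simp
  qed
qed

lemma alg1: "((x::complex)\<^sup>2 + 1) * p = x * (x * p + 1 * q) - 1 * (- 1 * p + x * q)"
  by (simp add: algebra_simps power2_eq_square)

lemma alg2: "((x::complex)\<^sup>2 + 1) * q = 1 * (x * p + 1 * q) + x * (- 1 * p + x * q)"
  by (simp add: algebra_simps power2_eq_square)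

lemma P_zero:
  assumes A: "\<And>x1 x2. Apoly m1 m2 n (of_real x1) (of_real x2) = 0"
    and B: "\<And>x1 x2. Bpoly m1 m2 n (of_real x1) (of_real x2) = 0"
  shows "Ppoly m1 n (of_real s) 1 = 0" "Ppoly m2 n (of_real s) 1 = 0"
proof -
  have ne: "(complex_of_real s)\<^sup>2 + 1 \<noteq> 0"
  proof
    assume "(complex_of_real s)\<^sup>2 + 1 = 0"
    then have "complex_of_real (s\<^sup>2 + 1) = 0" by simp
    then have "s\<^sup>2 + 1 = 0" by (simp only: of_real_eq_0_iff)
    moreover have "s\<^sup>2 + 1 > 0" by (simp add: add_nonneg_pos)
    ultimately show False by simp
  qed
  have a0: "Apoly m1 m2 n (of_real s) (of_real 1) = 0" by (rule A)
  have b0: "Bpoly m1 m2 n (of_real s) (of_real 1) = 0" by (rule B)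
  have a1: "of_real s * Ppoly m1 n (of_real s) 1 + 1 * Ppoly m2 n (of_real s) 1 = 0"
    using a0 unfolding Apoly_def of_real_1 .
  have b1: "- 1 * Ppoly m1 n (of_real s) 1 + of_real s * Ppoly m2 n (of_real s) 1 = 0"
    using b0 unfolding Bpoly_def of_real_1 .
  have "((complex_of_real s)\<^sup>2 + 1) * Ppoly m1 n (of_real s) 1 = 0"
    unfolding alg1[where q="Ppoly m2 n (of_real s) 1"] a1 b1 by simp
  then show "Ppoly m1 n (of_real s) 1 = 0" using ne by simp
  have "((complex_of_real s)\<^sup>2 + 1) * Ppoly m2 n (of_real s) 1 = 0"
    unfolding alg2[where p="Ppoly m1 n (of_real s) 1"] a1 b1 by simp
  then show "Ppoly m2 n (of_real s) 1 = 0" using ne by simp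
qed

lemma Ppoly_coeffs:
  assumes P: "\<And>s::real. Ppoly m n (of_real s) 1 = 0" and k: "k \<le> n"
  shows "m k (n - k) = 0"
proof -
  define c where "c k = of_nat (n choose k) * m k (n-k)" for k
  have eq: "Ppoly m n z 1 = (\<Sum>i\<le>n. c i * z^i)" for z
    unfolding Ppoly_def c_def by (intro sum.cong) (auto simp: mult_ac)
  have sub: "range complex_of_real \<subseteq> {z. (\<Sum>i\<le>n. c i * z^i) = 0}"
  proof
    fix z assume "z \<in> range complex_of_real"
    then obtain s where "z = complex_of_real s" by blast
    then show "z \<in> {z. (\<Sum>i\<le>n. c i * z^i) = 0}" using P[of s] eq[of z] by simp
  qed
  have inf: "infinite (range (complex_of_real))"
  proof
    assume "finite (range (complex_of_real))"
    then have "finite (UNIV :: real set)" by (rule finite_imageD) (rule inj_of_real)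
    then show False using infinite_UNIV_char_0 by auto
  qed
  have "infinite {z. (\<Sum>i\<le>n. c i * z^i) = 0}" by (rule infinite_super[OF sub inf])
  then have "\<not> (\<exists>i\<le>n. c i \<noteq> 0)" using polyfun_finite_roots[of c n] by blast
  then have "c k = 0" using k by blast
  then show ?thesis unfolding c_def using k by simp
qed

lemma moments_all_zero:
  fixes m1 m2 :: "nat \<Rightarrow> nat \<Rightarrow> complex" and q :: "real^2"
  assumes q: "q \<in> sphere 0 1"
    and hA: "\<And>x n. x \<in> S_q q \<Longrightarrow> Apoly m1 m2 n (of_real (x$1)) (of_real (x$2)) = 0"
    and hB: "\<And>x n. x \<in> Sperp_q q \<Longrightarrow> Bpoly m1 m2 n (of_real (x$1)) (of_real (x$2)) = 0"
  shows "m1 a b = 0 \<and> m2 a b = 0"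
proof -
  let ?n = "a + b"
  have A: "\<And>x1 x2. Apoly m1 m2 ?n (of_real x1) (of_real x2) = 0"
    and B: "\<And>x1 x2. Bpoly m1 m2 ?n (of_real x1) (of_real x2) = 0"
    using dir_extend[OF q hA hB] by blast+
  have "m1 a (?n - a) = 0" by (rule Ppoly_coeffs[OF P_zero(1)[OF A B]]) simp
  moreover have "m2 a (?n - a) = 0" by (rule Ppoly_coeffs[OF P_zero(2)[OF A B]]) simp
  ultimately show ?thesis by simp
qed



lemma comp_integrable:
  fixes F :: "real^2 \<Rightarrow> complex^2"
  assumes L: "L2_field F" and z: "\<forall>y. y \<notin> \<Omega> \<longrightarrow> F y = 0" and o: "open \<Omega>" and b: "bounded \<Omega>"
  shows "integrable lborel (\<lambda>y. F y $ j)"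
proof (rule Bochner_Integration.integrable_bound[where f="\<lambda>y. indicator \<Omega> y + (norm (F y))^2"])
  have Fm: "F \<in> borel_measurable lborel" and i2: "integrable lborel (\<lambda>y. (norm (F y))^2)"
    using L unfolding L2_field_def by auto
  have om: "\<Omega> \<in> sets lborel" using o by simp
  have "integrable lborel (indicat_real \<Omega>)"
    by (rule integrable_real_indicator[OF om emeasure_bounded_finite[OF b]])
  then show "integrable lborel (\<lambda>y. indicator \<Omega> y + (norm (F y))^2)"
    using i2 by (rule Bochner_Integration.integrable_add)
  show "(\<lambda>y. F y $ j) \<in> borel_measurable lborel"
  proof -
    have "((\<lambda>v. v $ j) :: complex^2 \<Rightarrow> complex) \<in> borel_measurable borel"
      by (rule borel_measurable_continuous_onI) (rule linear_continuous_on[OF bounded_linear_vec_nth])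
    from measurable_compose[OF Fm this] show ?thesis .
  qed
  show "AE y in lborel. norm (F y $ j) \<le> norm (indicator \<Omega> y + (norm (F y))^2 :: real)"
  proof (rule AE_I2)
    fix y
    show "norm (F y $ j) \<le> norm (indicator \<Omega> y + (norm (F y))^2 :: real)"
    proof (cases "y \<in> \<Omega>")
      case True
      have "norm (F y) \<le> 1 + (norm (F y))^2"
      proof (cases "norm (F y) \<le> 1")
        case True then show ?thesis by (simp add: add_increasing2)
      next
        case False
        then have "norm (F y) \<le> norm (F y) * norm (F y)" by (simp add: mult_le_cancel_left1)
        then show ?thesis by (simp add: power2_eq_square)
      qed
      moreover have "norm (F y $ j) \<le> norm (F y)" by (rule Finite_Cartesian_Product.norm_nth_le)
      ultimately show ?thesis using True by simp
    next
      case False then show ?thesis using z by simp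
    qed
  qed
qed

lemma dotc2: "dotc x v = complex_of_real (x$1) * v$1 + complex_of_real (x$2) * v$2"
  by (simp add: dotc_def)

lemma expand_moments:
  fixes g1 g2 :: "real^2 \<Rightarrow> complex" and x :: "real^2"
  assumes g1: "integrable lborel g1" and g2: "integrable lborel g2" and S: "bounded S"
    and z1: "\<forall>y. y \<notin> S \<longrightarrow> g1 y = 0" and z2: "\<forall>y. y \<notin> S \<longrightarrow> g2 y = 0"
  shows "(LINT y|lborel. complex_of_real (x \<bullet> y)^n * (complex_of_real a1 * g1 y + complex_of_real a2 * g2 y))
     = complex_of_real a1 * Ppoly (\<lambda>a b. Iint g1 (\<lambda>y. (y$1)^a * (y$2)^b)) n (of_real (x$1)) (of_real (x$2))
     + complex_of_real a2 * Ppoly (\<lambda>a b. Iint g2 (\<lambda>y. (y$1)^a * (y$2)^b)) n (of_real (x$1)) (of_real (x$2))"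
proof -
  define e where "e g k l y = complex_of_real ((y$1)^k * (y$2)^l) * g y" for g :: "real^2 \<Rightarrow> complex" and k l y
  define C where "C k = of_nat (n choose k) * complex_of_real (x$1) ^ k * complex_of_real (x$2) ^ (n-k)" for k
  have ie: "integrable lborel (e g k l)" if "integrable lborel g" "\<forall>y. y \<notin> S \<longrightarrow> g y = 0" for g k l
  proof -
    have "continuous_on UNIV (\<lambda>y::real^2. complex_of_real ((y$1)^k * (y$2)^l))"
      by (intro continuous_intros)
    from integrable_cont_mult[OF that(1) S that(2) this] show ?thesis unfolding e_def .
  qed
  have pw: "complex_of_real (x \<bullet> y)^n * (complex_of_real a1 * g1 y + complex_of_real a2 * g2 y)
     = (\<Sum>k\<le>n. C k * (complex_of_real a1 * e g1 k (n-k) y + complex_of_real a2 * e g2 k (n-k) y))" for y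
  proof -
    have "complex_of_real (x \<bullet> y)^n = (complex_of_real (x$1) * complex_of_real (y$1) + complex_of_real (x$2) * complex_of_real (y$2))^n"
      by (simp add: inner2)
    also have "\<dots> = (\<Sum>k\<le>n. of_nat (n choose k) * (complex_of_real (x$1) * complex_of_real (y$1))^k * (complex_of_real (x$2) * complex_of_real (y$2))^(n-k))"
      by (rule binomial_ring)
    also have "\<dots> = (\<Sum>k\<le>n. C k * complex_of_real ((y$1)^k * (y$2)^(n-k)))"
      unfolding C_def by (intro sum.cong refl) (simp add: power_mult_distrib mult_ac)
    finally have X: "complex_of_real (x \<bullet> y)^n = (\<Sum>k\<le>n. C k * complex_of_real ((y$1)^k * (y$2)^(n-k)))" .
    show ?thesis
      unfolding X sum_distrib_right e_def by (intro sum.cong refl) (simp add: algebra_simps)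
  qed
  have "(LINT y|lborel. complex_of_real (x \<bullet> y)^n * (complex_of_real a1 * g1 y + complex_of_real a2 * g2 y))
     = (\<Sum>k\<le>n. (LINT y|lborel. C k * (complex_of_real a1 * e g1 k (n-k) y + complex_of_real a2 * e g2 k (n-k) y)))"
    unfolding pw
  proof (rule Bochner_Integration.integral_sum)
    fix k
    show "integrable lborel (\<lambda>y. C k * (complex_of_real a1 * e g1 k (n-k) y + complex_of_real a2 * e g2 k (n-k) y))"
      using ie[OF g1 z1, of k "n-k"] ie[OF g2 z2, of k "n-k"]
      by (intro integrable_mult_right Bochner_Integration.integrable_add) auto
  qed
  also have "\<dots> = (\<Sum>k\<le>n. C k * (complex_of_real a1 * (LINT y|lborel. e g1 k (n-k) y) + complex_of_real a2 * (LINT y|lborel. e g2 k (n-k) y)))"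
  proof (intro sum.cong refl)
    fix k
    have "(LINT y|lborel. C k * (complex_of_real a1 * e g1 k (n-k) y + complex_of_real a2 * e g2 k (n-k) y))
       = C k * (LINT y|lborel. complex_of_real a1 * e g1 k (n-k) y + complex_of_real a2 * e g2 k (n-k) y)"
      by (rule integral_mult_right_zero)
    also have "(LINT y|lborel. complex_of_real a1 * e g1 k (n-k) y + complex_of_real a2 * e g2 k (n-k) y)
       = (LINT y|lborel. complex_of_real a1 * e g1 k (n-k) y) + (LINT y|lborel. complex_of_real a2 * e g2 k (n-k) y)"
      using ie[OF g1 z1] ie[OF g2 z2] by (intro Bochner_Integration.integral_add) auto
    finally show "(LINT y|lborel. C k * (complex_of_real a1 * e g1 k (n-k) y + complex_of_real a2 * e g2 k (n-k) y))
       = C k * (complex_of_real a1 * (LINT y|lborel. e g1 k (n-k) y) + complex_of_real a2 * (LINT y|lborel. e g2 k (n-k) y))"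
      by simp
  qed
  also have "\<dots> = complex_of_real a1 * Ppoly (\<lambda>a b. Iint g1 (\<lambda>y. (y$1)^a * (y$2)^b)) n (of_real (x$1)) (of_real (x$2))
     + complex_of_real a2 * Ppoly (\<lambda>a b. Iint g2 (\<lambda>y. (y$1)^a * (y$2)^b)) n (of_real (x$1)) (of_real (x$2))"
    unfolding Ppoly_def Iint_def e_def C_def sum_distrib_left sum.distrib[symmetric]
    by (intro sum.cong refl) (simp add: algebra_simps)
  finally show ?thesis .
qed



theorem theorem3p4:
  fixes mu lam \<omega>min \<omega>max :: real
    and \<Omega> :: "(real^2) set"
    and F1 F2 :: "real^2 \<Rightarrow> complex^2"
    and \<tau>1 \<tau>2 \<tau>3 :: complex
    and z q :: "real^2"
  assumes mu: "mu > 0" and lam: "2 * mu + lam > 0"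
    and W: "0 < \<omega>min" "\<omega>min < \<omega>max"
    and dom: "open \<Omega>" "connected \<Omega>" "bounded \<Omega>" "\<Omega> \<noteq> {}"
    and F1: "L2_field F1" "\<forall>y. y \<notin> \<Omega> \<longrightarrow> F1 y = 0"
    and F2: "L2_field F2" "\<forall>y. y \<notin> \<Omega> \<longrightarrow> F2 y = 0"
    and tau_dist: "\<tau>1 \<noteq> \<tau>2" "\<tau>1 \<noteq> \<tau>3" "\<tau>2 \<noteq> \<tau>3"
    and tau_indep: "\<forall>a b :: real. a *\<^sub>R (\<tau>2 - \<tau>1) + b *\<^sub>R (\<tau>3 - \<tau>1) = 0 \<longrightarrow> a = 0 \<and> b = 0"
    and z: "z \<notin> closure \<Omega>"
    and q: "q \<in> sphere 0 1"
    and Dp: "\<forall>x \<in> S_q q. \<forall>\<omega> \<in> {\<omega>min<..<\<omega>max}. \<forall>\<tau> \<in> {\<tau>1, \<tau>2, \<tau>3}.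
               norm (uinf_pz mu lam F1 z x q \<omega> \<tau>) = norm (uinf_pz mu lam F2 z x q \<omega> \<tau>)"
    and Ds: "\<forall>x \<in> Sperp_q q. \<forall>\<omega> \<in> {\<omega>min<..<\<omega>max}. \<forall>\<tau> \<in> {\<tau>1, \<tau>2, \<tau>3}.
               norm (uinf_sz mu F1 z x q \<omega> \<tau>) = norm (uinf_sz mu F2 z x q \<omega> \<tau>)"
  shows "AE y in lborel. F1 y = F2 y"
proof -
  obtain B where B: "\<forall>y\<in>\<Omega>. norm y \<le> B" using dom(3) by (auto simp: bounded_iff)
  define g1 where "g1 y = F1 y $ 1 - F2 y $ 1" for y
  define g2 where "g2 y = F1 y $ 2 - F2 y $ 2" for y
  have i11: "integrable lborel (\<lambda>y. F1 y $ 1)" by (rule comp_integrable[OF F1(1) F1(2) dom(1) dom(3)])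
  have i12: "integrable lborel (\<lambda>y. F1 y $ 2)" by (rule comp_integrable[OF F1(1) F1(2) dom(1) dom(3)])
  have i21: "integrable lborel (\<lambda>y. F2 y $ 1)" by (rule comp_integrable[OF F2(1) F2(2) dom(1) dom(3)])
  have i22: "integrable lborel (\<lambda>y. F2 y $ 2)" by (rule comp_integrable[OF F2(1) F2(2) dom(1) dom(3)])
  have gi1: "integrable lborel g1" unfolding g1_def using i11 i21 by (rule Bochner_Integration.integrable_diff)
  have gi2: "integrable lborel g2" unfolding g2_def using i12 i22 by (rule Bochner_Integration.integrable_diff)
  have gz1: "\<forall>y. y \<notin> \<Omega> \<longrightarrow> g1 y = 0" unfolding g1_def using F1(2) F2(2) by simp
  have gz2: "\<forall>y. y \<notin> \<Omega> \<longrightarrow> g2 y = 0" unfolding g2_def using F1(2) F2(2) by simp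
  define m1 where "m1 = (\<lambda>a b. Iint g1 (\<lambda>y. (y$1)^a * (y$2)^b))"
  define m2 where "m2 = (\<lambda>a b. Iint g2 (\<lambda>y. (y$1)^a * (y$2)^b))"
  have intF: "integrable lborel (\<lambda>y. exp (- \<i> * complex_of_real (k * (x \<bullet> y))) * (complex_of_real a1 * F y $ 1 + complex_of_real a2 * F y $ 2))"
    if Fi: "integrable lborel (\<lambda>y. F y $ 1)" "integrable lborel (\<lambda>y. F y $ 2)" and Fz: "\<forall>y. y \<notin> \<Omega> \<longrightarrow> F y = 0"
    for F :: "real^2 \<Rightarrow> complex^2" and k a1 a2 x
  proof -
    have hi: "integrable lborel (\<lambda>y. complex_of_real a1 * F y $ 1 + complex_of_real a2 * F y $ 2)"
      using Fi by (intro Bochner_Integration.integrable_add integrable_mult_right)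
    have hz: "\<forall>y. y \<notin> \<Omega> \<longrightarrow> complex_of_real a1 * F y $ 1 + complex_of_real a2 * F y $ 2 = 0"
      using Fz by simp
    have ct: "continuous_on UNIV (\<lambda>y::real^2. exp (- \<i> * complex_of_real (k * (x \<bullet> y))))"
      by (intro continuous_intros)
    show ?thesis by (rule integrable_cont_mult[OF hi dom(3) hz ct])
  qed
  have diff: "(LINT y|lborel. exp (- \<i> * complex_of_real (k * (x \<bullet> y))) * (complex_of_real a1 * F1 y $ 1 + complex_of_real a2 * F1 y $ 2))
      - (LINT y|lborel. exp (- \<i> * complex_of_real (k * (x \<bullet> y))) * (complex_of_real a1 * F2 y $ 1 + complex_of_real a2 * F2 y $ 2))
      = (LINT y|lborel. exp (- \<i> * complex_of_real (k * (x \<bullet> y))) * (complex_of_real a1 * g1 y + complex_of_real a2 * g2 y))"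
    for k a1 a2 x
  proof -
    have "(LINT y|lborel. exp (- \<i> * complex_of_real (k * (x \<bullet> y))) * (complex_of_real a1 * F1 y $ 1 + complex_of_real a2 * F1 y $ 2))
      - (LINT y|lborel. exp (- \<i> * complex_of_real (k * (x \<bullet> y))) * (complex_of_real a1 * F2 y $ 1 + complex_of_real a2 * F2 y $ 2))
      = (LINT y|lborel. exp (- \<i> * complex_of_real (k * (x \<bullet> y))) * (complex_of_real a1 * F1 y $ 1 + complex_of_real a2 * F1 y $ 2)
          - exp (- \<i> * complex_of_real (k * (x \<bullet> y))) * (complex_of_real a1 * F2 y $ 1 + complex_of_real a2 * F2 y $ 2))"
      by (rule Bochner_Integration.integral_diff[symmetric]) (rule intF[OF i11 i12 F1(2)], rule intF[OF i21 i22 F2(2)])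
    also have "\<dots> = (LINT y|lborel. exp (- \<i> * complex_of_real (k * (x \<bullet> y))) * (complex_of_real a1 * g1 y + complex_of_real a2 * g2 y))"
      unfolding g1_def g2_def by (intro Bochner_Integration.integral_cong refl) (simp add: algebra_simps)
    finally show ?thesis .
  qed
  have chan: "(LINT y|lborel. complex_of_real (x \<bullet> y)^n * (complex_of_real a1 * g1 y + complex_of_real a2 * g2 y)) = 0"
    if x: "x \<in> sphere 0 1" and c: "c > 0"
      and Z: "\<And>\<omega>. \<omega>min < \<omega> \<Longrightarrow> \<omega> < \<omega>max \<Longrightarrow>
         (LINT y|lborel. exp (- \<i> * complex_of_real ((\<omega> / c) * (x \<bullet> y))) * (complex_of_real a1 * g1 y + complex_of_real a2 * g2 y)) = 0"
    for x c a1 a2 n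
  proof (rule entire_moments[where M=lborel and s="\<lambda>y. x \<bullet> y" and R=B and a="\<omega>min / c" and b="\<omega>max / c"])
    show "integrable lborel (\<lambda>y. complex_of_real a1 * g1 y + complex_of_real a2 * g2 y)"
      using gi1 gi2 by (intro Bochner_Integration.integrable_add integrable_mult_right)
    show "(\<lambda>y. x \<bullet> y) \<in> borel_measurable lborel"
      by (simp add: borel_measurable_continuous_onI continuous_on_inner continuous_on_const continuous_on_id)
    show "\<bar>x \<bullet> y\<bar> \<le> B" if "y \<in> space lborel" "complex_of_real a1 * g1 y + complex_of_real a2 * g2 y \<noteq> 0" for y
    proof -
      have "y \<in> \<Omega>"
      proof (rule ccontr)
        assume "y \<notin> \<Omega>"
        then have "g1 y = 0" "g2 y = 0" using gz1 gz2 by blast+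
        then show False using that(2) by simp
      qed
      then have "norm y \<le> B" using B by blast
      moreover have "\<bar>x \<bullet> y\<bar> \<le> norm x * norm y" by (rule Cauchy_Schwarz_ineq2)
      moreover have "norm x = 1" using x by simp
      ultimately show ?thesis by simp
    qed
    show "\<omega>min / c < \<omega>max / c" using W c by (simp add: divide_strict_right_mono)
    show "(LINT y|lborel. exp (- \<i> * complex_of_real (t * (x \<bullet> y))) * (complex_of_real a1 * g1 y + complex_of_real a2 * g2 y)) = 0"
      if t: "\<omega>min / c < t" "t < \<omega>max / c" for t
    proof -
      have "\<omega>min < t * c" "t * c < \<omega>max" using t c by (simp_all add: field_simps)
      from Z[OF this] show ?thesis using c by simp
    qed
  qed
  have hA: "Apoly m1 m2 n (of_real (x$1)) (of_real (x$2)) = 0" if x: "x \<in> S_q q" for x n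
  proof -
    have xs: "x \<in> sphere 0 1" and qx: "q \<bullet> x \<ge> 1/2" using x unfolding S_q_def by auto
    define c where "c = sqrt (lam + 2 * mu)"
    have c: "c > 0" unfolding c_def using lam by simp
    have pe: "uinf_p mu lam F1 x \<omega> = uinf_p mu lam F2 x \<omega>" if w: "\<omega>min < \<omega>" "\<omega> < \<omega>max" for \<omega>
    proof (rule phase_retrieval[OF tau_indep])
      show "exp (- \<i> * complex_of_real (kp mu lam \<omega> * (x \<bullet> z))) * complex_of_real (q \<bullet> x) \<noteq> 0"
        using qx by simp
      fix t assume t: "t \<in> {\<tau>1, \<tau>2, \<tau>3}"
      have "norm (uinf_pz mu lam F1 z x q \<omega> t) = norm (uinf_pz mu lam F2 z x q \<omega> t)"
        using Dp x w t by auto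
      then show "norm (uinf_p mu lam F1 x \<omega> + t * (exp (- \<i> * complex_of_real (kp mu lam \<omega> * (x \<bullet> z))) * complex_of_real (q \<bullet> x)))
          = norm (uinf_p mu lam F2 x \<omega> + t * (exp (- \<i> * complex_of_real (kp mu lam \<omega> * (x \<bullet> z))) * complex_of_real (q \<bullet> x)))"
        unfolding uinf_pz_def by (simp add: mult.assoc)
    qed
    have "(LINT y|lborel. complex_of_real (x \<bullet> y)^n * (complex_of_real (x$1) * g1 y + complex_of_real (x$2) * g2 y)) = 0"
    proof (rule chan[OF xs c])
      fix \<omega> assume w: "\<omega>min < \<omega>" "\<omega> < \<omega>max"
      have "kp mu lam \<omega> = \<omega> / c" unfolding kp_def c_def ..
      then have "(LINT y|lborel. exp (- \<i> * complex_of_real ((\<omega> / c) * (x \<bullet> y))) * (complex_of_real (x$1) * g1 y + complex_of_real (x$2) * g2 y))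
          = uinf_p mu lam F1 x \<omega> - uinf_p mu lam F2 x \<omega>"
        unfolding uinf_p_def dotc2 diff by simp
      then show "(LINT y|lborel. exp (- \<i> * complex_of_real ((\<omega> / c) * (x \<bullet> y))) * (complex_of_real (x$1) * g1 y + complex_of_real (x$2) * g2 y)) = 0"
        using pe[OF w] by simp
    qed
    then show ?thesis
      unfolding expand_moments[OF gi1 gi2 dom(3) gz1 gz2] Apoly_def m1_def m2_def .
  qed
  have hB: "Bpoly m1 m2 n (of_real (x$1)) (of_real (x$2)) = 0" if x: "x \<in> Sperp_q q" for x n
  proof -
    have xs: "x \<in> sphere 0 1" and qx: "q \<bullet> perp x \<ge> 1/2" using x unfolding Sperp_q_def by auto
    define c where "c = sqrt mu"
    have c: "c > 0" unfolding c_def using mu by simp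
    have dp: "dotc (perp x) v = complex_of_real (- (x$2)) * v$1 + complex_of_real (x$1) * v$2" for v
      unfolding dotc2 perp_def by simp
    have pe: "uinf_s mu F1 x \<omega> = uinf_s mu F2 x \<omega>" if w: "\<omega>min < \<omega>" "\<omega> < \<omega>max" for \<omega>
    proof (rule phase_retrieval[OF tau_indep])
      show "exp (- \<i> * complex_of_real (ks mu \<omega> * (x \<bullet> z))) * complex_of_real (q \<bullet> perp x) \<noteq> 0"
        using qx by simp
      fix t assume t: "t \<in> {\<tau>1, \<tau>2, \<tau>3}"
      have "norm (uinf_sz mu F1 z x q \<omega> t) = norm (uinf_sz mu F2 z x q \<omega> t)"
        using Ds x w t by auto
      then show "norm (uinf_s mu F1 x \<omega> + t * (exp (- \<i> * complex_of_real (ks mu \<omega> * (x \<bullet> z))) * complex_of_real (q \<bullet> perp x)))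
          = norm (uinf_s mu F2 x \<omega> + t * (exp (- \<i> * complex_of_real (ks mu \<omega> * (x \<bullet> z))) * complex_of_real (q \<bullet> perp x)))"
        unfolding uinf_sz_def by (simp add: mult.assoc)
    qed
    have "(LINT y|lborel. complex_of_real (x \<bullet> y)^n * (complex_of_real (- (x$2)) * g1 y + complex_of_real (x$1) * g2 y)) = 0"
    proof (rule chan[OF xs c])
      fix \<omega> assume w: "\<omega>min < \<omega>" "\<omega> < \<omega>max"
      have "ks mu \<omega> = \<omega> / c" unfolding ks_def c_def ..
      then have "(LINT y|lborel. exp (- \<i> * complex_of_real ((\<omega> / c) * (x \<bullet> y))) * (complex_of_real (- (x$2)) * g1 y + complex_of_real (x$1) * g2 y))
          = uinf_s mu F1 x \<omega> - uinf_s mu F2 x \<omega>"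
        unfolding uinf_s_def dp diff by simp
      then show "(LINT y|lborel. exp (- \<i> * complex_of_real ((\<omega> / c) * (x \<bullet> y))) * (complex_of_real (- (x$2)) * g1 y + complex_of_real (x$1) * g2 y)) = 0"
        using pe[OF w] by simp
    qed
    then show ?thesis
      unfolding expand_moments[OF gi1 gi2 dom(3) gz1 gz2] Bpoly_def m1_def m2_def by simp
  qed
  have mz: "m1 a b = 0 \<and> m2 a b = 0" for a b
    by (rule moments_all_zero[OF q hA hB])
  have ae1: "AE y in lborel. g1 y = 0"
    by (rule moments_zero_ae[OF gi1 dom(3) gz1]) (use mz in \<open>simp add: m1_def\<close>)
  have ae2: "AE y in lborel. g2 y = 0"
    by (rule moments_zero_ae[OF gi2 dom(3) gz2]) (use mz in \<open>simp add: m2_def\<close>)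
  show ?thesis
    using ae1 ae2
  proof eventually_elim
    case (elim y)
    then show ?case unfolding g1_def g2_def by (simp add: vec_eq_iff forall_2)
  qed
qed

end
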